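(* Let $f$ be a polynomial with integer coefficients of degree $r\ge3$ with positive leading coefficient, positive and strictly increasing on $[0,\infty)$, and let $g_N(x)=f'(x)\left(1-\frac{f(x)}{f(N)}\right)\big/\int_0^N f'(t)\left(1-\frac{f(t)}{f(N)}\right)dt$. For any fixed integers $Q,k\ge2$, \[ \liminf_{N\to\infty}\inf_{u\in\mathbb{R}^2}\sum_{\substack{d\in\pm D_{Q!,k}\\ u\cdot d\in\mathfrak{M}_{N,Q}}}\sum_{j=1}^N g_N(j)\,e(u\cdot f(j)d)\ge -4. \]
   Context: $e(\alpha)=e^{2\pi i\alpha}$ and $u\cdot x$ is the dot product. For positive integers $q,k$ with $k\ge2$, let $X_{q,k}=\prod_{j=1}^{k-1}(q^{k+j}+q^{k-j}+1)$ and let $D_{q,k}\subseteq\mathbb{Z}^2$ consist of the points $\frac{X_{q,k}}{q^{k+j}+q^{k-j}+1}\left(q^{k+j}-q^{k-j},\,-q^j-2q^k\right)$ for $j=1,\ldots,k-1$; $\pm D_{q,k}=\{\pm d:d\in D_{q,k}\}$. The major arcs are $\mathfrak{M}_{N,Q}=\bigcup[\frac ab-N^{-r+\frac1r},\frac ab+N^{-r+\frac1r}]$, the union over all non-zero coprime integers $a,b$ with $2\le b\le Q$. *)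

theory Defs
  imports "HOL-Analysis.Analysis" "HOL-Computational_Algebra.Polynomial"
begin

definition e_fun :: "real \<Rightarrow> complex" where
  "e_fun \<alpha> = exp (2 * of_real pi * \<i> * of_real \<alpha>)"

definition polyR :: "int poly \<Rightarrow> real \<Rightarrow> real" where
  "polyR f x = poly (map_poly real_of_int f) x"

definition polyR' :: "int poly \<Rightarrow> real \<Rightarrow> real" where
  "polyR' f x = poly (pderiv (map_poly real_of_int f)) x"

definition gN :: "int poly \<Rightarrow> nat \<Rightarrow> real \<Rightarrow> real" where
  "gN f N x = polyR' f x * (1 - polyR f x / polyR f (real N)) /
      integral {0..real N} (\<lambda>t. polyR' f t * (1 - polyR f t / polyR f (real N)))"

definition Xqk :: "int \<Rightarrow> nat \<Rightarrow> int" where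
  "Xqk q k = (\<Prod>j\<in>{1..k-1}. q^(k+j) + q^(k-j) + 1)"

definition Dqk :: "int \<Rightarrow> nat \<Rightarrow> (int \<times> int) set" where
  "Dqk q k = (\<lambda>j. (Xqk q k div (q^(k+j) + q^(k-j) + 1) * (q^(k+j) - q^(k-j)),
                     Xqk q k div (q^(k+j) + q^(k-j) + 1) * (- (q^j) - 2 * q^k))) ` {1..k-1}"

definition pmDqk :: "int \<Rightarrow> nat \<Rightarrow> (int \<times> int) set" where
  "pmDqk q k = Dqk q k \<union> (\<lambda>(a,b). (-a,-b)) ` Dqk q k"

definition dotp :: "real \<times> real \<Rightarrow> int \<times> int \<Rightarrow> real" where
  "dotp u d = fst u * real_of_int (fst d) + snd u * real_of_int (snd d)"

text \<open>Major arcs M_{N,Q}, with r the degree of f\<close>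
definition major_arcs :: "nat \<Rightarrow> nat \<Rightarrow> nat \<Rightarrow> real set" where
  "major_arcs r N Q = (\<Union>{ {real_of_int a / real_of_int b - real N powr (- real r + 1 / real r) ..
                          real_of_int a / real_of_int b + real N powr (- real r + 1 / real r)}
        | a b. a \<noteq> 0 \<and> b \<noteq> 0 \<and> coprime a b \<and> 2 \<le> b \<and> b \<le> int Q })"

end

theory Submission
  imports Defs
begin
definition cc :: "int \<Rightarrow> nat \<Rightarrow> nat \<Rightarrow> int" where
  "cc q k j = q^(k+j) + q^(k-j) + 1"
definition vv :: "int \<Rightarrow> nat \<Rightarrow> nat \<Rightarrow> int \<times> int" where
  "vv q k j = (q^(k+j) - q^(k-j), - (q^j) - 2 * q^k)"
definition det2 :: "int \<times> int \<Rightarrow> int \<times> int \<Rightarrow> int" where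
  "det2 x y = fst x * snd y - snd x * fst y"
definition dv :: "int \<Rightarrow> nat \<Rightarrow> nat \<Rightarrow> int \<times> int" where
  "dv q k j = (Xqk q k div (q^(k+j) + q^(k-j) + 1) * (q^(k+j) - q^(k-j)),
                     Xqk q k div (q^(k+j) + q^(k-j) + 1) * (- (q^j) - 2 * q^k))"

lemma Dqk_eq: "Dqk q k = dv q k ` {1..k-1}"
  unfolding Dqk_def dv_def by simp

lemma det_vv_param:
  "det2 (vv q (i+a+b+2) i) (vv q (i+a+b+2) (i+a+1)) = q^(i+b+1) *
    (q * (2*q^(2*i+3*a+b+3) - 2*q^(2*i+2*a+b+2) + 2*q^(2*a+b+2) - 2*q^(a+b+1) + q^(2*a+1)) - 1)"
proof -
  define X where "X = q^i"
  define A where "A = q^a"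
  define B where "B = q^b"
  have vi: "vv q (i+a+b+2) i = (X*X*A*B*q*q - A*B*q*q, - X - 2*(X*A*B*q*q))"
    unfolding vv_def X_def A_def B_def
    by (simp add: power_add power2_eq_square)
  have vj: "vv q (i+a+b+2) (i+a+1) = (X*X*A*A*B*q*q*q - B*q, - (X*A*q) - 2*(X*A*B*q*q))"
    unfolding vv_def X_def A_def B_def
    by (simp add: power_add power2_eq_square)
  have rhs: "q^(i+b+1) *
    (q * (2*q^(2*i+3*a+b+3) - 2*q^(2*i+2*a+b+2) + 2*q^(2*a+b+2) - 2*q^(a+b+1) + q^(2*a+1)) - 1)
    = X*B*q * (q * (2*(X*X*A*A*A*B*q*q*q) - 2*(X*X*A*A*B*q*q) + 2*(A*A*B*q*q) - 2*(A*B*q) + A*A*q) - 1)"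
  proof -
    have e: "2*i+3*a+b+3 = i+i+a+a+a+b+1+1+1" "2*i+2*a+b+2 = i+i+a+a+b+1+1"
      "2*a+b+2 = a+a+b+1+1" "2*a+1 = a+a+1" by simp_all
    show ?thesis unfolding e unfolding X_def A_def B_def power_add by simp
  qed
  show ?thesis unfolding rhs det2_def vi vj fst_conv snd_conv
    by (simp add: algebra_simps)
qed

lemma det_vv:
  assumes "i < j" "j < k"
  shows "\<exists>E. det2 (vv q k i) (vv q k j) = q^(k-(j-i)) * (q*E - 1)"
proof -
  define a where "a = j - i - 1"
  define b where "b = k - j - 1"
  have k: "k = i+a+b+2" and j: "j = i+a+1" using assms unfolding a_def b_def by auto
  have "k - (j-i) = i+b+1" using k j by simp
  then show ?thesis unfolding k j using det_vv_param[of q i a b] by simp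
qed

lemma prod_mod1:
  assumes "\<And>l. l \<in> A \<Longrightarrow> \<exists>M. f l = q*M + (1::int)"
  shows "\<exists>M. prod f A = q*M + 1"
  using assms
proof (induction A rule: infinite_finite_induct)
  case (infinite A) then show ?case by (intro exI[of _ 0]) simp
next
  case empty then show ?case by (intro exI[of _ 0]) simp
next
  case (insert x F)
  obtain M where M: "prod f F = q*M+1" using insert by auto
  obtain M' where M': "f x = q*M'+1" using insert by auto
  have "prod f (insert x F) = f x * prod f F" using insert by simp
  also have "\<dots> = q*(q*M'*M + M' + M) + 1" unfolding M M' by (simp add: algebra_simps)
  finally show ?case by blast
qed

lemma cc_mod:
  assumes "1 \<le> l" "l < k"
  shows "\<exists>M. cc q k l = q*M + 1"
proof -
  have "q^(k+l) = q * q^(k+l-1)" using power_Suc[of q "k+l-1"] assms by simp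
  moreover have "q^(k-l) = q*q^(k-l-1)"
  proof -
    have "k - l = Suc (k-l-1)" using assms by simp
    then show ?thesis by (metis power_Suc)
  qed
  ultimately show ?thesis unfolding cc_def by (intro exI[of _ "q^(k+l-1) + q^(k-l-1)"]) (simp add: algebra_simps)
qed

lemma cc_pos:
  assumes "q \<ge> 2" shows "cc q k l > 0"
  unfolding cc_def using assms by (simp add: add_pos_pos)

lemma Xdiv:
  assumes "q \<ge> 2" "j \<in> {1..k-1}"
  shows "Xqk q k div cc q k j = prod (cc q k) ({1..k-1}-{j})"
proof -
  have "Xqk q k = cc q k j * prod (cc q k) ({1..k-1}-{j})"
    unfolding Xqk_def cc_def[symmetric] using assms(2) by (simp add: prod.remove)
  then show ?thesis using cc_pos[OF assms(1), of k j] by simp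
qed

lemma m_mod:
  assumes "q \<ge> 2" "j \<in> {1..k-1}"
  shows "\<exists>M. Xqk q k div cc q k j = q*M + 1"
  unfolding Xdiv[OF assms] by (rule prod_mod1) (use cc_mod in auto)

lemma dv_eq: "dv q k j = (Xqk q k div cc q k j * fst (vv q k j), Xqk q k div cc q k j * snd (vv q k j))"
  unfolding dv_def cc_def vv_def by simp

lemma det_dv:
  assumes "q \<ge> 2" "1 \<le> i" "i < j" "j < k"
  shows "\<exists>E. det2 (dv q k i) (dv q k j) = q^(k-(j-i)) * (q*E - 1)"
proof -
  obtain E where E: "det2 (vv q k i) (vv q k j) = q^(k-(j-i)) * (q*E - 1)" using det_vv assms by blast
  have "i \<in> {1..k-1}" "j \<in> {1..k-1}" using assms by auto
  then obtain Mi Mj where Mi: "Xqk q k div cc q k i = q*Mi + 1" and Mj: "Xqk q k div cc q k j = q*Mj + 1"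
    using m_mod[OF assms(1)] by blast
  have "det2 (dv q k i) (dv q k j) = (q*Mi+1)*(q*Mj+1) * det2 (vv q k i) (vv q k j)"
    unfolding dv_eq det2_def Mi Mj by (simp add: algebra_simps)
  also have "\<dots> = q^(k-(j-i)) * (q*((q*Mi*Mj + Mi + Mj)*(q*E-1) + E) - 1)"
    unfolding E by (simp add: algebra_simps)
  finally show ?thesis by blast
qed

lemma det_rel:
  "real_of_int (det2 y z) * dotp u x - real_of_int (det2 x z) * dotp u y + real_of_int (det2 x y) * dotp u z = 0"
  unfolding det2_def dotp_def by (simp add: algebra_simps)

definition KK :: "int \<Rightarrow> nat \<Rightarrow> int" where
  "KK q k = (\<Sum>a\<in>{1..k-1}. \<Sum>b\<in>{1..k-1}. \<bar>det2 (dv q k a) (dv q k b)\<bar>)"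

lemma KK_ge: "a \<in> {1..k-1} \<Longrightarrow> b \<in> {1..k-1} \<Longrightarrow> \<bar>det2 (dv q k a) (dv q k b)\<bar> \<le> KK q k"
proof -
  assume a: "a \<in> {1..k-1}" and b: "b \<in> {1..k-1}"
  have "\<bar>det2 (dv q k a) (dv q k b)\<bar> \<le> (\<Sum>b\<in>{1..k-1}. \<bar>det2 (dv q k a) (dv q k b)\<bar>)"
    by (rule member_le_sum[OF b]) auto
  also have "\<dots> \<le> KK q k" unfolding KK_def
    by (rule member_le_sum[OF a, where f = "\<lambda>a. \<Sum>b\<in>{1..k-1}. \<bar>det2 (dv q k a) (dv q k b)\<bar>"]) (auto intro: sum_nonneg)
  finally show ?thesis .
qed

definition near :: "nat \<Rightarrow> real \<Rightarrow> real \<Rightarrow> bool" where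
  "near Q \<delta> t \<longleftrightarrow> (\<exists>a b. a \<noteq> 0 \<and> coprime a b \<and> 2 \<le> b \<and> b \<le> int Q \<and>
      \<bar>t - real_of_int a / real_of_int b\<bar> \<le> \<delta>)"

lemma int_abs_lt1: "\<bar>real_of_int z\<bar> < 1 \<Longrightarrow> z = 0"
  by linarith

lemma no_three:
  fixes q :: int and k Q :: nat and u :: "real \<times> real"
  assumes q2: "q \<ge> 2" and qdvd: "\<And>b. 2 \<le> b \<Longrightarrow> b \<le> int Q \<Longrightarrow> b dvd q"
    and d0: "0 \<le> \<delta>" and dK: "3 * real_of_int q * real_of_int (KK q k) * \<delta> < 1"
    and i: "1 \<le> i1" "i1 < i2" "i2 < i3" "i3 < k"
    and n1: "near Q \<delta> (dotp u (dv q k i1))"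
    and n2: "near Q \<delta> (dotp u (dv q k i2))"
    and n3: "near Q \<delta> (dotp u (dv q k i3))"
  shows False
proof -
  obtain a1 b1 where ab1: "a1 \<noteq> 0" "coprime a1 b1" "2 \<le> b1" "b1 \<le> int Q"
    "\<bar>dotp u (dv q k i1) - real_of_int a1 / real_of_int b1\<bar> \<le> \<delta>" using n1 unfolding near_def by blast
  obtain a2 b2 where ab2: "a2 \<noteq> 0" "coprime a2 b2" "2 \<le> b2" "b2 \<le> int Q"
    "\<bar>dotp u (dv q k i2) - real_of_int a2 / real_of_int b2\<bar> \<le> \<delta>" using n2 unfolding near_def by blast
  obtain a3 b3 where ab3: "a3 \<noteq> 0" "coprime a3 b3" "2 \<le> b3" "b3 \<le> int Q"
    "\<bar>dotp u (dv q k i3) - real_of_int a3 / real_of_int b3\<bar> \<le> \<delta>" using n3 unfolding near_def by blast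
  define D23 where "D23 = det2 (dv q k i2) (dv q k i3)"
  define D13 where "D13 = det2 (dv q k i1) (dv q k i3)"
  define D12 where "D12 = det2 (dv q k i1) (dv q k i2)"
  define t1 where "t1 = dotp u (dv q k i1)"
  define t2 where "t2 = dotp u (dv q k i2)"
  define t3 where "t3 = dotp u (dv q k i3)"
  define c1 where "c1 = q div b1"
  define c2 where "c2 = q div b2"
  define c3 where "c3 = q div b3"
  have qc1: "q = b1 * c1" unfolding c1_def using qdvd[OF ab1(3,4)] by simp
  have qc2: "q = b2 * c2" unfolding c2_def using qdvd[OF ab2(3,4)] by simp
  have qc3: "q = b3 * c3" unfolding c3_def using qdvd[OF ab3(3,4)] by simp
  have rel: "D23 * t1 - D13 * t2 + D12 * t3 = 0"
    unfolding D23_def D13_def D12_def t1_def t2_def t3_def by (rule det_rel)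
  define Z where "Z = D23 * a1 * c1 - D13 * a2 * c2 + D12 * a3 * c3"
  have rc1: "real_of_int c1 = q / b1" using qc1 ab1(3) by (simp add: field_simps)
  have rc2: "real_of_int c2 = q / b2" using qc2 ab2(3) by (simp add: field_simps)
  have rc3: "real_of_int c3 = q / b3" using qc3 ab3(3) by (simp add: field_simps)
  define e1 where "e1 = a1 / b1 - t1"
  define e2 where "e2 = a2 / b2 - t2"
  define e3 where "e3 = a3 / b3 - t3"
  have "real_of_int Z = q * (D23 * (a1/b1) - D13 * (a2/b2) + D12 * (a3/b3))"
    unfolding Z_def by (simp add: rc1 rc2 rc3 algebra_simps)
  also have "\<dots> = q * (D23 * (a1/b1) - D13 * (a2/b2) + D12 * (a3/b3)) - q * (D23 * t1 - D13 * t2 + D12 * t3)"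
    using rel by simp
  also have "\<dots> = q * (D23 * e1 - D13 * e2 + D12 * e3)"
    unfolding e1_def e2_def e3_def by (simp add: algebra_simps)
  finally have Zeq: "real_of_int Z = q * (D23 * e1 - D13 * e2 + D12 * e3)" .
  have ie: "\<bar>e1\<bar> \<le> \<delta>" "\<bar>e2\<bar> \<le> \<delta>" "\<bar>e3\<bar> \<le> \<delta>"
    using ab1(5) ab2(5) ab3(5) unfolding e1_def e2_def e3_def t1_def t2_def t3_def by auto
  have mem: "i1 \<in> {1..k-1}" "i2 \<in> {1..k-1}" "i3 \<in> {1..k-1}" using i by auto
  have KD: "\<bar>real_of_int D23\<bar> \<le> KK q k" "\<bar>real_of_int D13\<bar> \<le> KK q k" "\<bar>real_of_int D12\<bar> \<le> KK q k"
    unfolding D23_def D13_def D12_def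
    using of_int_le_iff[THEN iffD2, OF KK_ge[OF mem(2) mem(3)]] of_int_le_iff[THEN iffD2, OF KK_ge[OF mem(1) mem(3)]]
      of_int_le_iff[THEN iffD2, OF KK_ge[OF mem(1) mem(2)]] by simp_all
  have b1: "\<bar>D23 * e1\<bar> \<le> KK q k * \<delta>"
    unfolding abs_mult by (rule mult_mono) (use KD ie in auto)
  have b2: "\<bar>D13 * e2\<bar> \<le> KK q k * \<delta>"
    unfolding abs_mult by (rule mult_mono) (use KD ie in auto)
  have b3: "\<bar>D12 * e3\<bar> \<le> KK q k * \<delta>"
    unfolding abs_mult by (rule mult_mono) (use KD ie in auto)
  have "\<bar>D23 * e1 - D13 * e2 + D12 * e3\<bar> \<le> 3 * (KK q k * \<delta>)" using b1 b2 b3 by linarith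
  hence "\<bar>real_of_int Z\<bar> \<le> q * (3 * (KK q k * \<delta>))"
    unfolding Zeq abs_mult using q2 by (simp add: mult_left_mono)
  hence "\<bar>real_of_int Z\<bar> < 1" using dK by (simp add: algebra_simps)
  hence Z0: "Z = 0" by (rule int_abs_lt1)
  define n where "n = k - (i3 - i1)"
  have i2: "1 \<le> i2" "i1 < i3" "i2 < k" using i by auto
  obtain E23 where E23: "D23 = q^(k-(i3-i2)) * (q*E23 - 1)" unfolding D23_def using det_dv[OF q2 i2(1) i(3) i(4)] by blast
  obtain E13 where E13: "D13 = q^n * (q*E13 - 1)" unfolding D13_def n_def using det_dv[OF q2 i(1) i2(2) i(4)] by blast
  obtain E12 where E12: "D12 = q^(k-(i2-i1)) * (q*E12 - 1)" unfolding D12_def using det_dv[OF q2 i(1) i(2) i2(3)] by blast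
  have "q^(n+1) dvd q^(k-(i3-i2))" by (rule le_imp_power_dvd) (use i in \<open>simp add: n_def\<close>)
  hence d23: "q^(n+1) dvd D23 * a1 * c1" unfolding E23 by simp
  have "q^(n+1) dvd q^(k-(i2-i1))" by (rule le_imp_power_dvd) (use i in \<open>simp add: n_def\<close>)
  hence d12: "q^(n+1) dvd D12 * a3 * c3" unfolding E12 by simp
  have "D13 * a2 * c2 = D23 * a1 * c1 + D12 * a3 * c3" using Z0 unfolding Z_def by simp
  hence "q^(n+1) dvd D13 * a2 * c2" using d23 d12 by simp
  hence "q^n * q dvd q^n * ((q*E13 - 1) * a2 * c2)" unfolding E13 by (simp add: algebra_simps)
  hence "q dvd (q*E13 - 1) * a2 * c2" using q2 by (subst (asm) dvd_times_left_cancel_iff) auto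
  hence "q dvd q * (E13 * a2 * c2) - a2 * c2" by (simp add: algebra_simps)
  hence "q dvd q * (E13 * a2 * c2) - (q * (E13 * a2 * c2) - a2 * c2)"
    using dvd_diff[OF dvd_triv_left[of q "E13*a2*c2"]] by blast
  hence "q dvd a2 * c2" by simp
  hence "b2 * c2 dvd a2 * c2" using qc2 by simp
  moreover have "c2 \<noteq> 0" using qc2 q2 by auto
  ultimately have "b2 dvd a2" by simp
  hence "b2 dvd gcd a2 b2" by simp
  hence "b2 dvd 1" using ab2(2) by (simp add: coprime_iff_gcd_eq_1)
  hence "b2 \<le> 1" by (simp add: zdvd_imp_le)
  with ab2(3) show False by simp
qed

lemma major_near:
  assumes "t \<in> major_arcs r N Q"
  shows "near Q (real N powr (- real r + 1 / real r)) t"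
  using assms unfolding major_arcs_def near_def by (auto simp: abs_le_iff) (metis add.commute diff_le_eq le_diff_eq)

lemma near_neg: "near Q \<delta> t \<Longrightarrow> near Q \<delta> (-t)"
  unfolding near_def
proof (elim exE conjE)
  fix a b assume h: "a \<noteq> 0" "coprime a b" "2 \<le> b" "b \<le> int Q" "\<bar>t - real_of_int a / real_of_int b\<bar> \<le> \<delta>"
  show "\<exists>a b. a \<noteq> 0 \<and> coprime a b \<and> 2 \<le> b \<and> b \<le> int Q \<and> \<bar>- t - real_of_int a / real_of_int b\<bar> \<le> \<delta>"
    by (rule exI[of _ "-a"], rule exI[of _ b]) (use h in \<open>auto simp: abs_minus_commute\<close>)
qed

lemma card_J:
  fixes q :: int and k Q :: nat and u :: "real \<times> real"
  assumes q2: "q \<ge> 2" and qdvd: "\<And>b. 2 \<le> b \<Longrightarrow> b \<le> int Q \<Longrightarrow> b dvd q"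
    and d0: "0 \<le> \<delta>" and dK: "3 * real_of_int q * real_of_int (KK q k) * \<delta> < 1"
  shows "card {j \<in> {1..k-1}. near Q \<delta> (dotp u (dv q k j))} \<le> 2"
proof (rule ccontr)
  define J where "J = {j \<in> {1..k-1}. near Q \<delta> (dotp u (dv q k j))}"
  assume "\<not> card {j \<in> {1..k-1}. near Q \<delta> (dotp u (dv q k j))} \<le> 2"
  hence c3: "card J \<ge> 3" unfolding J_def by simp
  have fin: "finite J" unfolding J_def by simp
  have ne: "J \<noteq> {}" using c3 by auto
  define a where "a = Min J"
  define c where "c = Max J"
  have aJ: "a \<in> J" and cJ: "c \<in> J" unfolding a_def c_def using fin ne by auto
  have "card (J - {a, c}) \<ge> card J - card {a,c}" by (rule diff_card_le_card_Diff) simp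
  moreover have "card {a,c} \<le> 2" by (simp add: card_insert_le_m1)
  ultimately have "card (J - {a,c}) \<ge> 1" using c3 by linarith
  hence "J - {a,c} \<noteq> {}" by (metis card.empty not_one_le_zero)
  then obtain b where bJ: "b \<in> J" "b \<noteq> a" "b \<noteq> c" by auto
  have "a \<le> b" unfolding a_def using fin bJ by simp
  hence ab: "a < b" using bJ by simp
  have "b \<le> c" unfolding c_def using fin bJ by simp
  hence bc: "b < c" using bJ by simp
  have "1 \<le> a" "c < k" using aJ cJ unfolding J_def by auto
  moreover have "near Q \<delta> (dotp u (dv q k a))" "near Q \<delta> (dotp u (dv q k b))" "near Q \<delta> (dotp u (dv q k c))"
    using aJ bJ cJ unfolding J_def by auto
  ultimately show False using no_three[OF q2 qdvd d0 dK _ ab bc] by blast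
qed

lemma dotp_neg: "dotp u ((\<lambda>(a,b). (-a,-b)) x) = - dotp u x"
  unfolding dotp_def by (cases x) simp

lemma card_le4:
  fixes q :: int and k Q :: nat and u :: "real \<times> real"
  assumes q2: "q \<ge> 2" and qdvd: "\<And>b. 2 \<le> b \<Longrightarrow> b \<le> int Q \<Longrightarrow> b dvd q"
    and d: "\<delta> = real N powr (- real r + 1 / real r)"
    and dK: "3 * real_of_int q * real_of_int (KK q k) * \<delta> < 1"
  shows "card {d \<in> pmDqk q k. dotp u d \<in> major_arcs r N Q} \<le> 4"
proof -
  define J where "J = {j \<in> {1..k-1}. near Q \<delta> (dotp u (dv q k j))}"
  define ng where "ng = (\<lambda>(a::int,b::int). (-a,-b))"
  have d0: "0 \<le> \<delta>" unfolding d by (rule powr_ge_zero)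
  have cJ: "card J \<le> 2" unfolding J_def
    using card_J[where q=q and Q=Q and \<delta>=\<delta> and k=k and u=u] q2 qdvd dK d0 by blast
  have finJ: "finite J" unfolding J_def by simp
  have sub: "{d \<in> pmDqk q k. dotp u d \<in> major_arcs r N Q} \<subseteq> dv q k ` J \<union> ng ` dv q k ` J"
  proof
    fix d assume "d \<in> {d \<in> pmDqk q k. dotp u d \<in> major_arcs r N Q}"
    hence dm: "d \<in> pmDqk q k" and nd: "near Q \<delta> (dotp u d)"
      using major_near d by auto
    from dm consider (p) j where "j \<in> {1..k-1}" "d = dv q k j" | (m) j where "j \<in> {1..k-1}" "d = ng (dv q k j)"
      unfolding pmDqk_def Dqk_eq ng_def by blast
    then show "d \<in> dv q k ` J \<union> ng ` dv q k ` J"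
    proof cases
      case p then show ?thesis using nd unfolding J_def by auto
    next
      case m
      have "dotp u d = - dotp u (dv q k j)" unfolding m ng_def by (rule dotp_neg)
      hence "near Q \<delta> (dotp u (dv q k j))" using near_neg[OF nd] by simp
      then show ?thesis using m unfolding J_def by auto
    qed
  qed
  have "card {d \<in> pmDqk q k. dotp u d \<in> major_arcs r N Q} \<le> card (dv q k ` J \<union> ng ` dv q k ` J)"
    by (rule card_mono[OF _ sub]) (simp add: finJ)
  also have "\<dots> \<le> card (dv q k ` J) + card (ng ` dv q k ` J)" by (rule card_Un_le)
  also have "\<dots> \<le> card J + card J"
    using card_image_le[OF finJ, of "dv q k"] card_image_le[OF finite_imageI[OF finJ], of ng "dv q k"] by linarith
  finally show ?thesis using cJ by linarith
qed

lemma poly_bound: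
  fixes p :: "real poly"
  assumes "degree p \<le> d" "0 \<le> x" "x \<le> N" "1 \<le> N"
  shows "\<bar>poly p x\<bar> \<le> (\<Sum>i\<le>degree p. \<bar>coeff p i\<bar>) * N^d"
proof -
  have "\<bar>poly p x\<bar> = \<bar>\<Sum>i\<le>degree p. coeff p i * x^i\<bar>" by (simp add: poly_altdef)
  also have "\<dots> \<le> (\<Sum>i\<le>degree p. \<bar>coeff p i * x^i\<bar>)" by (rule sum_abs)
  also have "\<dots> \<le> (\<Sum>i\<le>degree p. \<bar>coeff p i\<bar> * N^d)"
  proof (rule sum_mono)
    fix i assume i: "i \<in> {..degree p}"
    have "x^i \<le> N^i" by (rule power_mono) (use assms in auto)
    also have "N^i \<le> N^d" by (rule power_increasing) (use assms i in auto)
    finally have "\<bar>x^i\<bar> \<le> N^d" using assms by simp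
    then show "\<bar>coeff p i * x^i\<bar> \<le> \<bar>coeff p i\<bar> * N^d"
      unfolding abs_mult by (rule mult_left_mono) simp
  qed
  also have "\<dots> = (\<Sum>i\<le>degree p. \<bar>coeff p i\<bar>) * N^d" by (simp add: sum_distrib_right)
  finally show ?thesis .
qed

lemma poly_lower:
  fixes p :: "real poly"
  assumes "degree p = r" "1 \<le> r" "lead_coeff p \<ge> 1" "1 \<le> x" "2 * (\<Sum>i<r. \<bar>coeff p i\<bar>) \<le> x"
  shows "x^r / 2 \<le> poly p x"
proof -
  define S where "S = (\<Sum>i<r. \<bar>coeff p i\<bar>)"
  have "poly p x = (\<Sum>i<Suc r. coeff p i * x^i)" by (simp add: poly_altdef assms(1) lessThan_Suc_atMost)
  also have "\<dots> = (\<Sum>i<r. coeff p i * x^i) + coeff p r * x^r" by simp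
  finally have pe: "poly p x = (\<Sum>i<r. coeff p i * x^i) + coeff p r * x^r" .
  have "\<bar>\<Sum>i<r. coeff p i * x^i\<bar> \<le> (\<Sum>i<r. \<bar>coeff p i * x^i\<bar>)" by (rule sum_abs)
  also have "\<dots> \<le> (\<Sum>i<r. \<bar>coeff p i\<bar> * x^(r-1))"
  proof (rule sum_mono)
    fix i assume i: "i \<in> {..<r}"
    have "x^i \<le> x^(r-1)" by (rule power_increasing) (use assms i in auto)
    hence "\<bar>x^i\<bar> \<le> x^(r-1)" using assms by simp
    then show "\<bar>coeff p i * x^i\<bar> \<le> \<bar>coeff p i\<bar> * x^(r-1)"
      unfolding abs_mult by (rule mult_left_mono) simp
  qed
  also have "\<dots> = S * x^(r-1)" unfolding S_def by (simp add: sum_distrib_right)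
  finally have b: "\<bar>\<Sum>i<r. coeff p i * x^i\<bar> \<le> S * x^(r-1)" .
  have xr: "x^r = x * x^(r-1)" using assms(2) by (metis Suc_diff_1 less_le_trans zero_less_one power_Suc)
  have xpos: "0 \<le> x^(r-1)" using assms by simp
  have "2 * S * x^(r-1) \<le> x * x^(r-1)" by (rule mult_right_mono) (use assms xpos in \<open>auto simp: S_def\<close>)
  hence s2: "S * x^(r-1) \<le> x^r / 2" unfolding xr by simp
  have "coeff p r * x^r \<ge> 1 * x^r" using assms by (intro mult_right_mono) auto
  thus ?thesis using pe b s2 by linarith
qed

lemma deriv_nonneg:
  fixes p :: "real poly"
  assumes sm: "strict_mono_on {0..} (poly p)" and x: "0 \<le> x"
  shows "0 \<le> poly (pderiv p) x"
proof (rule ccontr)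
  assume "\<not> 0 \<le> poly (pderiv p) x"
  hence "poly (pderiv p) x < 0" by simp
  from DERIV_neg_dec_right[OF poly_DERIV this] obtain d where d: "d > 0"
    "\<And>h. h > 0 \<Longrightarrow> h < d \<Longrightarrow> poly p x > poly p (x + h)" by blast
  have "poly p x > poly p (x + d/2)" using d by simp
  moreover have "poly p x < poly p (x + d/2)" by (rule strict_mono_onD[OF sm]) (use x d in auto)
  ultimately show False by simp
qed

lemma integral_val:
  fixes p :: "real poly"
  assumes "c \<noteq> 0" "0 \<le> a"
  shows "integral {0..a} (\<lambda>t. poly (pderiv p) t * (1 - poly p t / c)) =
    (poly p a - (poly p a)^2 / (2*c)) - (poly p 0 - (poly p 0)^2 / (2*c))"
proof -
  have d: "((\<lambda>t. poly p t - (poly p t)^2 / (2*c)) has_real_derivative poly (pderiv p) t * (1 - poly p t / c)) (at t)" for t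
  proof -
    have "((\<lambda>t. poly p t - (poly p t)^2 / (2*c)) has_real_derivative
       (poly (pderiv p) t - (of_nat 2 * (poly (pderiv p) t * poly p t ^ (2 - Suc 0))) / (2*c))) (at t)"
      by (intro derivative_intros DERIV_cdivide poly_DERIV DERIV_power)
    moreover have "poly (pderiv p) t - (of_nat 2 * (poly (pderiv p) t * poly p t ^ (2 - Suc 0))) / (2*c)
       = poly (pderiv p) t * (1 - poly p t / c)" using assms(1) by (simp add: field_simps)
    ultimately show ?thesis by simp
  qed
  have "((\<lambda>t. poly (pderiv p) t * (1 - poly p t / c)) has_integral
      ((poly p a - (poly p a)^2 / (2*c)) - (poly p 0 - (poly p 0)^2 / (2*c)))) {0..a}"
    by (rule fundamental_theorem_of_calculus[OF assms(2)])
       (auto simp: has_real_derivative_iff_has_vector_derivative[symmetric] intro: has_field_derivative_at_within[OF d])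
  then show ?thesis by (rule integral_unique)
qed

lemma sum_le_step:
  fixes \<Phi> \<phi> \<phi>' :: "real \<Rightarrow> real" and N :: nat
  assumes D1: "\<And>x. 0 \<le> x \<Longrightarrow> x \<le> real N \<Longrightarrow> DERIV \<Phi> x :> \<phi> x"
    and D2: "\<And>x. 0 \<le> x \<Longrightarrow> x \<le> real N \<Longrightarrow> DERIV \<phi> x :> \<phi>' x"
    and B: "\<And>x. 0 \<le> x \<Longrightarrow> x \<le> real N \<Longrightarrow> \<bar>\<phi>' x\<bar> \<le> M"
  shows "n \<le> N \<Longrightarrow> (\<Sum>j=1..n. \<phi> (real j)) \<le> \<Phi> (real n) - \<Phi> 0 + real n * M"
proof (induction n)
  case 0 then show ?case by simp
next
  case (Suc n)
  have nN: "real n + 1 \<le> real N" using Suc.prems by simp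
  obtain z where z: "real n < z" "z < real n + 1" "\<Phi> (real n + 1) - \<Phi> (real n) = (real n + 1 - real n) * \<phi> z"
    using MVT2[of "real n" "real n + 1" \<Phi> \<phi>] D1 nN by force
  obtain w where w: "z < w" "w < real n + 1" "\<phi> (real n + 1) - \<phi> z = (real n + 1 - z) * \<phi>' w"
    using MVT2[of z "real n + 1" \<phi> \<phi>'] D2 nN z by force
  have "\<bar>\<phi>' w\<bar> \<le> M" using B z w nN by auto
  hence "(real n + 1 - z) * \<phi>' w \<le> (real n + 1 - z) * \<bar>\<phi>' w\<bar>" using z by (intro mult_left_mono) auto
  also have "\<dots> \<le> 1 * M" using z \<open>\<bar>\<phi>' w\<bar> \<le> M\<close> by (intro mult_mono) auto
  finally have st: "\<phi> (real n + 1) \<le> \<Phi> (real n + 1) - \<Phi> (real n) + M" using z w by simp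
  have "(\<Sum>j=1..Suc n. \<phi> (real j)) = (\<Sum>j=1..n. \<phi> (real j)) + \<phi> (real n + 1)" by (simp add: add.commute)
  also have "\<dots> \<le> \<Phi> (real n) - \<Phi> 0 + real n * M + (\<Phi> (real n + 1) - \<Phi> (real n) + M)"
    using Suc st by simp
  finally show ?case by (simp add: algebra_simps)
qed

lemma Phi_deriv:
  fixes p :: "real poly"
  assumes "c \<noteq> 0"
  shows "((\<lambda>t. poly p t - (poly p t)^2 / (2*c)) has_real_derivative poly (pderiv p) t * (1 - poly p t / c)) (at t)"
proof -
  have "((\<lambda>t. poly p t - (poly p t)^2 / (2*c)) has_real_derivative
     (poly (pderiv p) t - (of_nat 2 * (poly (pderiv p) t * poly p t ^ (2 - Suc 0))) / (2*c))) (at t)"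
    by (intro derivative_intros DERIV_cdivide poly_DERIV DERIV_power)
  moreover have "poly (pderiv p) t - (of_nat 2 * (poly (pderiv p) t * poly p t ^ (2 - Suc 0))) / (2*c)
     = poly (pderiv p) t * (1 - poly p t / c)" using assms(1) by (simp add: field_simps)
  ultimately show ?thesis by simp
qed

lemma phi_deriv:
  fixes p :: "real poly"
  shows "((\<lambda>t. poly (pderiv p) t * (1 - poly p t / c)) has_real_derivative
     poly (pderiv (pderiv p)) t * (1 - poly p t / c) - poly (pderiv p) t * poly (pderiv p) t / c) (at t)"
proof -
  have "((\<lambda>t. poly (pderiv p) t * (1 - poly p t / c)) has_real_derivative
     poly (pderiv (pderiv p)) t * (1 - poly p t / c) + (0 - poly (pderiv p) t / c) * poly (pderiv p) t) (at t)"
    by (intro DERIV_mult DERIV_diff DERIV_const DERIV_cdivide poly_DERIV)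
  then show ?thesis by (simp add: algebra_simps)
qed

lemma re_term:
  assumes "0 \<le> g"
  shows "- g \<le> Re (complex_of_real g * e_fun x)"
proof -
  have e: "Re (e_fun x) = cos (2*pi*x)"
    unfolding e_fun_def by (simp add: Re_exp)
  have m: "g * (-1) \<le> g * cos (2*pi*x)" using assms by (intro mult_left_mono) auto
  show ?thesis using e m by simp
qed

lemma main_sum_bound:
  fixes f :: "int poly" and N :: nat
  defines "F \<equiv> map_poly real_of_int f"
  defines "F1 \<equiv> pderiv F"
  defines "F2 \<equiv> pderiv F1"
  defines "B1 \<equiv> (\<Sum>i\<le>degree F1. \<bar>coeff F1 i\<bar>)"
  defines "B2 \<equiv> (\<Sum>i\<le>degree F2. \<bar>coeff F2 i\<bar>)"
  defines "S0 \<equiv> (\<Sum>i<degree f. \<bar>coeff F i\<bar>)"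
  assumes r3: "degree f \<ge> 3" and lc: "lead_coeff f > 0"
    and pos: "\<forall>x\<ge>0. polyR f x > 0" and sm: "strict_mono_on {0..} (polyR f)"
    and N1: "1 \<le> N" and N2: "2 * S0 \<le> real N" and N3: "4 * \<bar>poly F 0\<bar> \<le> real N"
  shows "(\<forall>j\<in>{1..N}. 0 \<le> gN f N (real j)) \<and>
         (\<Sum>j=1..N. gN f N (real j)) \<le> 1 + (16*B2 + 32*B1^2) / real N"
proof -
  define r where "r = degree f"
  have pR: "polyR f = poly F" unfolding polyR_def F_def by (rule ext) simp
  have pR': "polyR' f = poly F1" unfolding polyR'_def F_def F1_def by (rule ext) simp
  have degF: "degree F = r" unfolding F_def r_def by (rule degree_map_poly) simp
  have degF1: "degree F1 = r - 1" unfolding F1_def using degF by (simp add: degree_pderiv)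
  have degF2: "degree F2 = r - 2" unfolding F2_def using degF1 by (simp add: degree_pderiv)
  have lcF: "lead_coeff F \<ge> 1"
  proof -
    have "lead_coeff F = coeff F r" using degF by simp
    also have "\<dots> = real_of_int (coeff f r)" unfolding F_def by (simp add: coeff_map_poly)
    finally have "lead_coeff F = real_of_int (lead_coeff f)" unfolding r_def .
    moreover have "lead_coeff f \<ge> 1" using lc by simp
    ultimately show ?thesis by simp
  qed
  have posF: "\<And>x. 0 \<le> x \<Longrightarrow> poly F x > 0" using pos unfolding pR by simp
  have smF: "strict_mono_on {0..} (poly F)" using sm unfolding pR .
  have monoF: "\<And>x y. 0 \<le> x \<Longrightarrow> x \<le> y \<Longrightarrow> poly F x \<le> poly F y"
    using strict_mono_onD[OF smF] by (metis atLeast_iff order_le_less order_trans)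
  define n where "n = real N"
  have n1: "1 \<le> n" unfolding n_def using N1 by simp
  define fN where "fN = poly F n"
  define f0 where "f0 = poly F 0"
  define P where "P = n ^ r"
  have r1: "1 \<le> r" using r3 r_def by simp
  have PfN: "P / 2 \<le> fN" unfolding P_def fN_def
    by (rule poly_lower[OF degF r1 lcF n1]) (use N2 in \<open>simp add: n_def S0_def r_def\<close>)
  have nP: "n \<le> P" unfolding P_def using power_increasing[OF r1, of n] n1 by simp
  have fNpos: "fN > 0" unfolding fN_def using posF n1 by simp
  have f0fN: "2 * \<bar>f0\<bar> \<le> fN" using PfN nP N3 unfolding f0_def n_def by linarith
  define \<Phi> where "\<Phi> = (\<lambda>t. poly F t - (poly F t)^2 / (2*fN))"
  define \<phi> where "\<phi> = (\<lambda>t. poly F1 t * (1 - poly F t / fN))"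
  define \<phi>' where "\<phi>' = (\<lambda>t. poly F2 t * (1 - poly F t / fN) - poly F1 t * poly F1 t / fN)"
  define I where "I = \<Phi> n - \<Phi> 0"
  have Ieq: "integral {0..real N} (\<lambda>t. polyR' f t * (1 - polyR f t / polyR f (real N))) = I"
    unfolding pR pR' I_def \<Phi>_def F1_def fN_def n_def
    by (rule integral_val) (use fNpos in \<open>auto simp: fN_def n_def\<close>)
  have Iclosed: "I = (fN - f0)^2 / (2*fN)"
    unfolding I_def \<Phi>_def fN_def[symmetric] f0_def[symmetric] using fNpos
    by (simp add: field_simps power2_eq_square)
  have "fN / 2 \<le> fN - f0" using f0fN by linarith
  hence "(fN/2)^2 \<le> (fN - f0)^2" using fNpos by (intro power_mono) auto
  hence "(fN/2)^2 / (2*fN) \<le> I" unfolding Iclosed using fNpos by (intro divide_right_mono) auto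
  hence Ilow: "fN / 8 \<le> I" using fNpos by (simp add: power2_eq_square field_simps)
  have Ipos: "I > 0" using Ilow fNpos by linarith
  have ratio: "\<And>x. 0 \<le> x \<Longrightarrow> x \<le> n \<Longrightarrow> 0 \<le> 1 - poly F x / fN \<and> 1 - poly F x / fN \<le> 1"
  proof -
    fix x assume x: "0 \<le> x" "x \<le> n"
    have "poly F x \<le> fN" unfolding fN_def by (rule monoF) (use x in auto)
    moreover have "poly F x > 0" using posF x by simp
    ultimately show "0 \<le> 1 - poly F x / fN \<and> 1 - poly F x / fN \<le> 1" using fNpos by (auto simp: field_simps)
  qed
  have phinn: "\<And>x. 0 \<le> x \<Longrightarrow> x \<le> n \<Longrightarrow> 0 \<le> \<phi> x"
    unfolding \<phi>_def F1_def using deriv_nonneg[OF smF] ratio by (simp add: mult_nonneg_nonneg)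
  define M where "M = B2 * n^(r-2) + (B1 * n^(r-1))^2 / fN"
  have Mb: "\<bar>\<phi>' x\<bar> \<le> M" if x: "0 \<le> x" "x \<le> n" for x
  proof -
    have b2: "\<bar>poly F2 x\<bar> \<le> B2 * n^(r-2)" unfolding B2_def by (rule poly_bound) (use x n1 degF2 in auto)
    have b1: "\<bar>poly F1 x\<bar> \<le> B1 * n^(r-1)" unfolding B1_def by (rule poly_bound) (use x n1 degF1 in auto)
    have "\<bar>poly F2 x * (1 - poly F x / fN)\<bar> \<le> \<bar>poly F2 x\<bar> * 1"
      unfolding abs_mult using ratio[OF x] by (intro mult_left_mono) auto
    moreover have "\<bar>poly F1 x * poly F1 x / fN\<bar> \<le> (B1 * n^(r-1))^2 / fN"
    proof -
      have "\<bar>poly F1 x * poly F1 x\<bar> = \<bar>poly F1 x\<bar>^2" by (simp add: power2_eq_square abs_mult)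
      also have "\<dots> \<le> (B1 * n^(r-1))^2" by (rule power_mono[OF b1]) simp
      finally show ?thesis using fNpos by (simp add: divide_right_mono)
    qed
    moreover have "\<bar>\<phi>' x\<bar> \<le> \<bar>poly F2 x * (1 - poly F x / fN)\<bar> + \<bar>poly F1 x * poly F1 x / fN\<bar>"
      unfolding \<phi>'_def by (rule abs_triangle_ineq4)
    ultimately show ?thesis unfolding M_def using b2 by linarith
  qed
  have sumb: "(\<Sum>j=1..N. \<phi> (real j)) \<le> \<Phi> (real N) - \<Phi> 0 + real N * M"
  proof (rule sum_le_step[where \<phi>' = \<phi>'])
    show "\<And>x. 0 \<le> x \<Longrightarrow> x \<le> real N \<Longrightarrow> (\<Phi> has_real_derivative \<phi> x) (at x)"
      unfolding \<Phi>_def \<phi>_def F1_def by (rule Phi_deriv) (use fNpos in simp)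
    show "\<And>x. 0 \<le> x \<Longrightarrow> x \<le> real N \<Longrightarrow> (\<phi> has_real_derivative \<phi>' x) (at x)"
      unfolding \<phi>_def \<phi>'_def F2_def F1_def by (rule phi_deriv)
    show "\<And>x. 0 \<le> x \<Longrightarrow> x \<le> real N \<Longrightarrow> \<bar>\<phi>' x\<bar> \<le> M" using Mb n_def by simp
  qed simp
  have gN_eq: "\<And>x. gN f N x = \<phi> x / I"
    unfolding gN_def Ieq unfolding pR pR' \<phi>_def fN_def n_def ..
  have sumg: "(\<Sum>j=1..N. gN f N (real j)) = (\<Sum>j=1..N. \<phi> (real j)) / I"
    unfolding gN_eq by (simp add: sum_divide_distrib)
  have nM: "n * M \<le> (2*B2 + 4*B1^2) * fN / n"
  proof -
    have B1nn: "0 \<le> B1" and B2nn: "0 \<le> B2" unfolding B1_def B2_def by (auto intro: sum_nonneg)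
    have "r = Suc (r-1)" using r1 by simp
    hence "P = n * n^(r-1)" unfolding P_def by (metis power_Suc)
    hence pr1: "n^(r-1) = P / n" using n1 by simp
    have "r = (r-2) + 2" using r3 r_def by simp
    hence "P = n^(r-2) * n^2" unfolding P_def by (metis power_add)
    hence pr2: "n^(r-2) = P / n^2" using n1 by simp
    have "n * M = B2 * (P / n) + B1^2 * (P * P) / (n * fN)"
      unfolding M_def pr1 pr2 using n1 by (simp add: field_simps power2_eq_square)
    also have "\<dots> \<le> B2 * (2*fN / n) + B1^2 * (2*fN * (2*fN)) / (n * fN)"
    proof (rule add_mono)
      have "P / n \<le> 2 * fN / n" using PfN n1 by (intro divide_right_mono) auto
      then show "B2 * (P / n) \<le> B2 * (2*fN / n)" using B2nn by (rule mult_left_mono)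
      have P0: "0 \<le> P" unfolding P_def using n1 by simp
      have "P * P \<le> (2*fN) * (2*fN)" using PfN P0 by (intro mult_mono) auto
      hence "B1^2 * (P * P) \<le> B1^2 * ((2*fN) * (2*fN))" by (rule mult_left_mono) simp
      then show "B1^2 * (P * P) / (n * fN) \<le> B1^2 * (2*fN * (2*fN)) / (n * fN)"
        using n1 fNpos by (intro divide_right_mono) auto
    qed
    also have "\<dots> = (2*B2 + 4*B1^2) * fN / n" using fNpos n1 by (simp add: field_simps power2_eq_square)
    finally show ?thesis .
  qed
  have "(\<Sum>j=1..N. gN f N (real j)) \<le> (I + n * M) / I"
    unfolding sumg using sumb Ipos unfolding I_def n_def by (intro divide_right_mono) auto
  also have "\<dots> = 1 + n * M / I" using Ipos by (simp add: field_simps)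
  also have "n * M / I \<le> ((2*B2 + 4*B1^2) * fN / n) / (fN / 8)"
  proof (rule frac_le)
    show "0 \<le> (2*B2 + 4*B1^2) * fN / n" unfolding B1_def B2_def using fNpos n1
      by (intro divide_nonneg_pos mult_nonneg_nonneg add_nonneg_nonneg sum_nonneg) auto
  qed (use nM Ilow fNpos in auto)
  also have "((2*B2 + 4*B1^2) * fN / n) / (fN / 8) = (16*B2 + 32*B1^2) / real N"
    using fNpos n1 unfolding n_def by (simp add: field_simps)
  finally have sb: "(\<Sum>j=1..N. gN f N (real j)) \<le> 1 + (16*B2 + 32*B1^2) / real N" by simp
  have "\<forall>j\<in>{1..N}. 0 \<le> gN f N (real j)"
    unfolding gN_eq using phinn Ipos n_def by (auto intro!: divide_nonneg_pos)
  with sb show ?thesis by blast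
qed

theorem lemma11:
  fixes f :: "int poly" and Q k :: nat
  assumes "degree f \<ge> 3"
    and "lead_coeff f > 0"
    and "\<forall>x\<ge>0. polyR f x > 0"
    and "strict_mono_on {0..} (polyR f)"
    and "Q \<ge> 2" and "k \<ge> 2"
  shows "Liminf sequentially (\<lambda>N::nat. INF u :: real \<times> real.
           ereal (Re (\<Sum>d \<in> {d \<in> pmDqk (int (fact Q)) k. dotp u d \<in> major_arcs (degree f) N Q}.
              \<Sum>j = 1..N. complex_of_real (gN f N (real j)) * e_fun (polyR f (real j) * dotp u d))))
         \<ge> - 4"
proof -
  define F where "F = map_poly real_of_int f"
  define B1 where "B1 = (\<Sum>i\<le>degree (pderiv F). \<bar>coeff (pderiv F) i\<bar>)"
  define B2 where "B2 = (\<Sum>i\<le>degree (pderiv (pderiv F)). \<bar>coeff (pderiv (pderiv F)) i\<bar>)"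
  define S0 where "S0 = (\<Sum>i<degree f. \<bar>coeff F i\<bar>)"
  define C where "C = 16*B2 + 32*B1^2"
  define q where "q = int (fact Q)"
  define K where "K = KK q k"
  define r where "r = degree f"
  define \<delta> where "\<delta> = (\<lambda>N::nat. real N powr (- real r + 1 / real r))"
  define X where "X = (\<lambda>N::nat. INF u :: real \<times> real.
           ereal (Re (\<Sum>d \<in> {d \<in> pmDqk (int (fact Q)) k. dotp u d \<in> major_arcs (degree f) N Q}.
              \<Sum>j = 1..N. complex_of_real (gN f N (real j)) * e_fun (polyR f (real j) * dotp u d))))"
  have q2: "q \<ge> 2"
  proof -
    have "Q \<le> fact Q" by (rule fact_ge_self)
    then show ?thesis unfolding q_def using assms(5) by linarith
  qed
  have qdvd: "b dvd q" if b: "2 \<le> b" "b \<le> int Q" for b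
  proof -
    have "nat b dvd fact Q" by (rule dvd_fact) (use b in auto)
    hence "int (nat b) dvd int (fact Q)" by (simp only: int_dvd_int_iff)
    then show ?thesis unfolding q_def using b by simp
  qed
  have r3: "r \<ge> 3" unfolding r_def using assms(1) .
  have "- real r + 1 / real r < 0"
  proof -
    have "1 / real r \<le> 1" using r3 by simp
    then show ?thesis using r3 by linarith
  qed
  hence "(\<delta> \<longlongrightarrow> 0) sequentially" unfolding \<delta>_def
    by (rule tendsto_neg_powr) (rule filterlim_real_sequentially)
  hence "((\<lambda>N. 3 * real_of_int q * real_of_int K * \<delta> N) \<longlongrightarrow> 3 * real_of_int q * real_of_int K * 0) sequentially"
    by (intro tendsto_mult tendsto_const)
  hence ev1: "eventually (\<lambda>N. 3 * real_of_int q * real_of_int K * \<delta> N < 1) sequentially"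
    by (rule order_tendstoD(2)) simp
  define N0 where "N0 = nat \<lceil>2 * S0 + 4 * \<bar>poly F 0\<bar>\<rceil> + 1"
  have ev2: "eventually (\<lambda>N. 1 \<le> N \<and> 2 * S0 \<le> real N \<and> 4 * \<bar>poly F 0\<bar> \<le> real N) sequentially"
  proof (rule eventually_sequentiallyI[of N0])
    fix N assume N: "N0 \<le> N"
    have S0nn: "0 \<le> S0" unfolding S0_def by (auto intro: sum_nonneg)
    have h1: "2 * S0 + 4 * \<bar>poly F 0\<bar> \<le> real (nat \<lceil>2 * S0 + 4 * \<bar>poly F 0\<bar>\<rceil>)" by (rule real_nat_ceiling_ge)
    have h2: "nat \<lceil>2 * S0 + 4 * \<bar>poly F 0\<bar>\<rceil> \<le> N" using le_trans[OF le_add1 N[unfolded N0_def]] .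
    have "2 * S0 + 4 * \<bar>poly F 0\<bar> \<le> real N" using h1 h2 by (meson of_nat_le_iff order_trans)
    then have hh: "2 * S0 + 4 * \<bar>poly F 0\<bar> \<le> real N" .
    show "1 \<le> N \<and> 2 * S0 \<le> real N \<and> 4 * \<bar>poly F 0\<bar> \<le> real N"
    proof (intro conjI)
      show "1 \<le> N" using N unfolding N0_def by simp
      show "2 * S0 \<le> real N" using hh abs_ge_zero[of "poly F 0"] by linarith
      show "4 * \<bar>poly F 0\<bar> \<le> real N" using hh S0nn by linarith
    qed
  qed
  have bound: "ereal (-4 * (1 + C / real N)) \<le> X N"
    if c1: "3 * real_of_int q * real_of_int K * \<delta> N < 1" and c2: "1 \<le> N" "2 * S0 \<le> real N" "4 * \<bar>poly F 0\<bar> \<le> real N" for N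
  proof -
    have msb: "(\<forall>j\<in>{1..N}. 0 \<le> gN f N (real j)) \<and> (\<Sum>j=1..N. gN f N (real j)) \<le> 1 + C / real N"
      unfolding C_def B1_def B2_def F_def
      by (rule main_sum_bound[OF assms(1-4) c2[unfolded S0_def F_def]])
    define S where "S = (\<Sum>j=1..N. gN f N (real j))"
    have gnn: "\<And>j. j \<in> {1..N} \<Longrightarrow> 0 \<le> gN f N (real j)" using msb by blast
    have Sb: "S \<le> 1 + C / real N" using msb unfolding S_def by blast
    have Snn: "0 \<le> S" unfolding S_def using gnn by (rule sum_nonneg)
    show ?thesis unfolding X_def
    proof (rule INF_greatest)
      fix u :: "real \<times> real"
      define A where "A = {d \<in> pmDqk (int (fact Q)) k. dotp u d \<in> major_arcs (degree f) N Q}"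
      have cA: "card A \<le> 4" unfolding A_def q_def[symmetric] r_def[symmetric]
        by (rule card_le4[OF q2 qdvd _ c1[unfolded K_def]]) (auto simp: \<delta>_def)
      have "Re (\<Sum>d\<in>A. \<Sum>j = 1..N. complex_of_real (gN f N (real j)) * e_fun (polyR f (real j) * dotp u d))
          = (\<Sum>d\<in>A. \<Sum>j = 1..N. Re (complex_of_real (gN f N (real j)) * e_fun (polyR f (real j) * dotp u d)))"
        by simp
      also have "\<dots> \<ge> (\<Sum>d\<in>A. \<Sum>j = 1..N. - gN f N (real j))"
        by (intro sum_mono re_term gnn) auto
      also have "(\<Sum>d\<in>A. \<Sum>j = 1..N. - gN f N (real j)) = - (real (card A) * S)"
        unfolding S_def by (simp add: sum_negf)
      finally have "- (real (card A) * S) \<le> Re (\<Sum>d\<in>A. \<Sum>j = 1..N. complex_of_real (gN f N (real j)) * e_fun (polyR f (real j) * dotp u d))" .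
      moreover have "real (card A) * S \<le> 4 * S" using cA Snn by (intro mult_right_mono) auto
      moreover have "4 * S \<le> 4 * (1 + C / real N)" using Sb by simp
      ultimately show "ereal (-4 * (1 + C / real N)) \<le> ereal (Re (\<Sum>d\<in>A. \<Sum>j = 1..N. complex_of_real (gN f N (real j)) * e_fun (polyR f (real j) * dotp u d)))"
        by simp
    qed
  qed
  have "- 4 \<le> Liminf sequentially X"
  proof (rule le_Liminf_iff[THEN iffD2], intro allI impI)
    fix y :: ereal assume y: "y < - 4"
    have "((\<lambda>N. -4 * (1 + C / real N)) \<longlongrightarrow> -4 * (1 + 0)) sequentially"
      by (intro tendsto_intros)
    hence "((\<lambda>N. ereal (-4 * (1 + C / real N))) \<longlongrightarrow> ereal (-4)) sequentially" by simp
    moreover have "y < ereal (-4)" using y by simp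
    ultimately have ev3: "eventually (\<lambda>N. y < ereal (-4 * (1 + C / real N))) sequentially"
      by (rule order_tendstoD(1))
    show "eventually (\<lambda>N. y < X N) sequentially"
      using ev1 ev2 ev3
    proof eventually_elim
      case (elim N)
      then show ?case using bound[of N] by (meson less_le_trans)
    qed
  qed
  then show ?thesis unfolding X_def .
qed

end
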